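(* Let $\mathcal{G}_N$ be the Newton group of transformations of $\mathbb{R}^4=\mathbb{R}^3\times\mathbb{R}$ of the form $(\mathbf{x},x^4)\mapsto(S\mathbf{x},x^4)+b$ ($S\in SO(3)$, $b\in\mathbb{R}^4$), and $\mathcal{G}$ the Galilei group of transformations $x\mapsto\begin{pmatrix}S&w\\0^T&1\end{pmatrix}x+b$ ($S\in SO(3)$, $w\in\mathbb{R}^3$, $b\in\mathbb{R}^4$). Say an equivalence relation $\sim$ on $\mathbb{R}^4$ satisfies the causality condition if $x\sim y$ implies $x^4=y^4$ (causally connectible events, i.e. events with different time coordinate, are never equivalent). Then the only nontrivial $\mathcal{G}_N$-invariant (respectively, the only nontrivial $\mathcal{G}$-invariant) equivalence relation on $\mathbb{R}^4$ satisfying the causality condition is absolute simultaneity: $x\sim y\iff x^4=y^4$.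
   Context: An equivalence relation is invariant under a group of transformations if $x\sim y$ implies $h(x)\sim h(y)$ for all $x,y$ and all $h$ in the group. It is trivial if it is the total relation or the identity relation (diagonal). *)

theory Defs
  imports "HOL-Analysis.Analysis"
begin

text \<open>Spacetime R^4 = R^3 x R: a point is (spatial vector, time coordinate x^4).\<close>
type_synonym event = "(real^3) \<times> real"

definition SO3 :: "(real^3^3) set" where
  "SO3 = {S. orthogonal_matrix S \<and> det S = 1}"

definition newton_group :: "(event \<Rightarrow> event) set" where
  "newton_group = {h. \<exists>S \<in> SO3. \<exists>b1 :: real^3. \<exists>b2 :: real.
      h = (\<lambda>(x, t). (S *v x + b1, t + b2))}"

definition galilei_group :: "(event \<Rightarrow> event) set" where
  "galilei_group = {h. \<exists>S \<in> SO3. \<exists>w :: real^3. \<exists>b1 :: real^3. \<exists>b2 :: real.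
      h = (\<lambda>(x, t). (S *v x + t *\<^sub>R w + b1, t + b2))}"

definition invariant_under :: "('a \<Rightarrow> 'a) set \<Rightarrow> 'a rel \<Rightarrow> bool" where
  "invariant_under H R \<longleftrightarrow> (\<forall>h \<in> H. \<forall>x y. (x, y) \<in> R \<longrightarrow> (h x, h y) \<in> R)"

definition trivial_rel :: "'a rel \<Rightarrow> bool" where
  "trivial_rel R \<longleftrightarrow> R = UNIV \<or> R = Id"

definition causality :: "event rel \<Rightarrow> bool" where
  "causality R \<longleftrightarrow> (\<forall>x y. (x, y) \<in> R \<longrightarrow> snd x = snd y)"

definition abs_simultaneity :: "event rel" where
  "abs_simultaneity = {(x, y). snd x = snd y}"

end

theory Submission
  imports Defs
begin

lemma newton_sub_galilei: "newton_group \<subseteq> galilei_group"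
proof
  fix h assume "h \<in> newton_group"
  then obtain S b1 b2 where "S \<in> SO3" "h = (\<lambda>(x, t). (S *v x + b1, t + b2))"
    unfolding newton_group_def by blast
  then show "h \<in> galilei_group" unfolding galilei_group_def
    by (intro CollectI bexI[of _ S] exI[of _ 0] exI[of _ b1] exI[of _ b2]) auto
qed

lemma id_SO3: "mat 1 \<in> SO3"
  unfolding SO3_def by (simp add: orthogonal_matrix_id det_I)

lemma transl:
  assumes inv: "invariant_under newton_group R" and xy: "((a,s),(c,t)) \<in> R"
  shows "((a + b1, s + b2),(c + b1, t + b2)) \<in> R"
proof -
  have "(\<lambda>(x, t). (mat 1 *v x + b1, t + b2)) \<in> newton_group"
    unfolding newton_group_def using id_SO3 by blast
  with inv xy show ?thesis unfolding invariant_under_def by fastforce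
qed

lemma rot:
  assumes inv: "invariant_under newton_group R" and xy: "((a,s),(c,t)) \<in> R"
    and S: "S \<in> SO3"
  shows "((S *v a, s),(S *v c, t)) \<in> R"
proof -
  have "(\<lambda>(x, t). (S *v x + 0, t + 0)) \<in> newton_group"
    unfolding newton_group_def using S by blast
  with inv xy show ?thesis unfolding invariant_under_def by fastforce
qed

lemma main:
  assumes eq: "equiv UNIV R" and inv: "invariant_under newton_group R"
    and caus: "causality R" and nid: "R \<noteq> Id"
  shows "R = abs_simultaneity"
proof -
  have refl: "(x,x) \<in> R" for x using eq unfolding equiv_def refl_on_def by blast
  have trans: "(x,y) \<in> R \<Longrightarrow> (y,z) \<in> R \<Longrightarrow> (x,z) \<in> R" for x y z
    using eq unfolding equiv_def trans_def by blast
  define D where "D = {e. (((0::real^3),(0::real)),(e,(0::real))) \<in> R}"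
  have add: "e + f \<in> D" if "e \<in> D" "f \<in> D" for e f
  proof -
    have "((0 + e, 0 + 0),(f + e, 0 + 0)) \<in> R"
      using transl[OF inv, of 0 0 f 0 e 0] that by (simp add: D_def)
    then have "((e,0),(e + f,0)) \<in> R" by (simp add: add.commute)
    with that show ?thesis unfolding D_def using trans by blast
  qed
  obtain x y where xy: "(x,y) \<in> R" "x \<noteq> y" using nid eq
    unfolding equiv_def refl_on_def by auto
  obtain a s c t where [simp]: "x = (a,s)" "y = (c,t)" by fastforce
  have st: "s = t" using caus xy unfolding causality_def by auto
  with xy have ac: "a \<noteq> c" by auto
  define d where "d = c - a"
  have "((a + - a, s + - s),(c + - a, t + - s)) \<in> R"
    using transl[OF inv, of a s c t "- a" "- s"] xy by simp
  then have dD: "d \<in> D" using st by (simp add: D_def d_def)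
  have d0: "d \<noteq> 0" using ac by (simp add: d_def)
  define r where "r = norm d"
  have r0: "r > 0" using d0 by (simp add: r_def)
  have sph: "e \<in> D" if ne: "norm e = r" for e
  proof -
    obtain f where f: "orthogonal_transformation f" "det (matrix f) = 1" "f d = e"
      using rotation_exists[of d e] ne by (auto simp: r_def)
    have lf: "linear f" using f(1) by (simp add: orthogonal_transformation)
    have S: "matrix f \<in> SO3" using f unfolding SO3_def
      by (simp add: orthogonal_transformation_matrix)
    have "((matrix f *v 0, 0),(matrix f *v d, 0)) \<in> R"
      using rot[OF inv _ S, of 0 0 d 0] dD by (simp add: D_def)
    then show ?thesis using f(3) fun_cong[OF matrix_vector_mul(2)[OF lf], of d] by (simp add: D_def matrix_vector_mult_0_right)
  qed
  have neg: "- e \<in> D" if "e \<in> D" for e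
  proof -
    have "((0 + - e, 0 + 0),(e + - e, 0 + 0)) \<in> R"
      using transl[OF inv, of 0 0 e 0 "-e" 0] that by (simp add: D_def)
    then have "((-e,0),(0,0)) \<in> R" by simp
    then show ?thesis using eq unfolding D_def equiv_def sym_def by blast
  qed
  have ball: "e \<in> D" if ne: "norm e \<le> 2 * r" for e
  proof -
    obtain u :: "real^3" where u: "u \<noteq> 0" "orthogonal e u"
      using orthogonal_to_vector_exists[of e] by auto
    have iu: "inner e u = 0" using u(2) by (simp add: orthogonal_def)
    define c where "c = sqrt (r^2 - (norm e / 2)^2) / norm u"
    have nn: "r^2 - (norm e / 2)^2 \<ge> 0"
    proof -
      have "norm e / 2 \<le> r" using ne by simp
      then have "(norm e / 2)^2 \<le> r^2" by (intro power_mono) auto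
      then show ?thesis by simp
    qed
    have cu: "c^2 * (norm u)^2 = r^2 - (norm e / 2)^2"
      using u(1) nn by (simp add: c_def power_divide)
    define p where "p = (1/2) *\<^sub>R e + c *\<^sub>R u"
    define q where "q = (1/2) *\<^sub>R e - c *\<^sub>R u"
    have iu': "inner u e = 0" using iu by (simp add: inner_commute)
    have cu': "c^2 * inner u u = r^2 - (1/2)^2 * inner e e"
      using cu by (simp add: power2_norm_eq_inner power_divide)
    have "inner p p = (1/2)^2 * inner e e + c^2 * inner u u" unfolding p_def
      by (simp add: inner_add_left inner_add_right iu iu' power2_eq_square)
    then have np: "(norm p)^2 = r^2" using cu' by (simp add: power2_norm_eq_inner)
    have "inner q q = (1/2)^2 * inner e e + c^2 * inner u u" unfolding q_def
      by (simp add: inner_diff_left inner_diff_right iu iu' power2_eq_square)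
    then have nq: "(norm q)^2 = r^2" using cu' by (simp add: power2_norm_eq_inner)
    have "norm p = r" using np r0 by (metis norm_ge_zero power2_eq_imp_eq less_imp_le)
    moreover have "norm q = r" using nq r0 by (metis norm_ge_zero power2_eq_imp_eq less_imp_le)
    ultimately have "p + q \<in> D" using sph add by blast
    moreover have "p + q = e" unfolding p_def q_def by (simp add: scaleR_left_distrib[symmetric])
    ultimately show ?thesis by simp
  qed
  have mult: "of_nat n *\<^sub>R e \<in> D" if "e \<in> D" for n e
  proof (induction n)
    case 0 then show ?case using refl by (simp add: D_def)
  next
    case (Suc n) then show ?case using add[OF Suc that] by (simp add: algebra_simps)
  qed
  have all: "e \<in> D" for e
  proof -
    obtain n :: nat where n: "norm e / (2 * r) < n" using reals_Archimedean2 by blast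
    have npos: "real n > 0" using n r0 by (smt (verit) divide_nonneg_pos norm_ge_zero)
    have "norm e < n * (2 * r)" using n r0 by (simp add: field_simps)
    then have "norm ((1 / real n) *\<^sub>R e) \<le> 2 * r" using npos
      by (simp add: field_simps)
    then have "of_nat n *\<^sub>R ((1 / real n) *\<^sub>R e) \<in> D" by (intro mult ball)
    then show ?thesis using npos by simp
  qed
  show ?thesis
  proof (rule set_eqI, clarify)
    fix a s c t
    show "((a,s),(c,t)) \<in> R \<longleftrightarrow> ((a,s),(c,t)) \<in> abs_simultaneity"
    proof
      assume "((a,s),(c,t)) \<in> R" then show "((a,s),(c,t)) \<in> abs_simultaneity"
        using caus unfolding causality_def abs_simultaneity_def by auto
    next
      assume "((a,s),(c,t)) \<in> abs_simultaneity"
      then have st: "s = t" by (simp add: abs_simultaneity_def)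
      have "((0 + a, 0 + s),((c - a) + a, 0 + s)) \<in> R"
        using transl[OF inv, of 0 0 "c - a" 0 a s] all[of "c - a"] by (simp add: D_def)
      then show "((a,s),(c,t)) \<in> R" using st by simp
    qed
  qed
qed

lemma abs_good:
  "equiv UNIV abs_simultaneity" "invariant_under galilei_group abs_simultaneity"
  "invariant_under newton_group abs_simultaneity"
  "causality abs_simultaneity" "\<not> trivial_rel abs_simultaneity"
proof -
  show "equiv UNIV abs_simultaneity"
    unfolding abs_simultaneity_def equiv_def refl_on_def sym_def trans_def by auto
  show g: "invariant_under galilei_group abs_simultaneity"
    unfolding invariant_under_def galilei_group_def abs_simultaneity_def by auto
  then show "invariant_under newton_group abs_simultaneity"
    using newton_sub_galilei unfolding invariant_under_def by blast
  show "causality abs_simultaneity"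
    unfolding causality_def abs_simultaneity_def by auto
  have "(((0::real^3),(0::real)),((0::real^3),(1::real))) \<notin> abs_simultaneity"
    by (simp add: abs_simultaneity_def)
  moreover have "(((0::real^3),(0::real)),(axis 1 (1::real),(0::real))) \<in> abs_simultaneity"
    by (simp add: abs_simultaneity_def)
  moreover have "((0::real^3),(0::real)) \<noteq> (axis 1 (1::real),(0::real))"
    by (simp add: axis_eq_0_iff)
  ultimately show "\<not> trivial_rel abs_simultaneity"
    unfolding trivial_rel_def by auto
qed

theorem proposition3p11:
  shows "{R. equiv UNIV R \<and> invariant_under newton_group R \<and> causality R \<and> \<not> trivial_rel R}
           = {abs_simultaneity}
       \<and> {R. equiv UNIV R \<and> invariant_under galilei_group R \<and> causality R \<and> \<not> trivial_rel R}
           = {abs_simultaneity}"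
proof -
  have gn: "invariant_under galilei_group R \<Longrightarrow> invariant_under newton_group R" for R :: "event rel"
    using newton_sub_galilei unfolding invariant_under_def by blast
  show ?thesis
    using main gn abs_good unfolding trivial_rel_def by blast
qed

end
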